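(* Let $X_N\subseteq\mathbb{R}^n\times\mathcal{N}$ be the feasibility domain of the terminal-set EMPC problem $\mathbb{P}_T$ below, and suppose there exist a control law $\kappa_f:\mathbb{R}^n\times\mathcal{N}\to\mathbb{R}^m$ and a family of sets $X^f=\{X^f_i\}_{i\in\mathcal{N}}$ that is uniformly positive invariant for the constrained system in closed loop with $\kappa_f$. Then $X_N$ is uniformly positive invariant for the MPC-controlled system $x_{k+1}=f(x_k,\hat\kappa_N(x_k,\theta_k),\theta_k)$, i.e., if $(x_k,\theta_k)\in X_N$ then $(x_{k+1},\theta_{k+1})\in X_N$ for every $\theta_{k+1}\in\mathcal{C}(\theta_k)$.
   Context: Setting: $\mathcal{N}=\{1,\dots,\nu\}$; $\{\theta_k\}$ a time-homogeneous, irreducible, aperiodic Markov chain on $\mathcal{N}$ with transition matrix $P=(p_{ij})$ on a filtered probability space $(\Omega,\mathfrak{F},\{\mathfrak{F}_k\},\mathbb{P})$, $\mathfrak{F}_k$ generated by the history up to time $k$; system $x_{k+1}=f(x_k,u_k,\theta_k)$, $x_k\in\mathbb{R}^n$, $u_k\in\mathbb{R}^m$, with $x_k,\theta_k$ measured at time $k$; constraints $(x_k,u_k)\in Y_{\theta_k}$ ($Y_\theta$ nonempty compact); stage cost $\ell$ with each $\ell(\cdot,\cdot,\theta)$ nonnegative, lower semicontinuous, level-bounded in $u$ locally uniformly in $x$; $f(\cdot,\cdot,\theta)$ continuous. $u\lhd\mathfrak{F}_k$ means $\mathfrak{F}_k$-measurable. Cover $\mathcal{C}(i)=\{j:p_{ij}>0\}$.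 Uniform positive invariance: a family of nonempty sets $C=\{C_i\}_{i\in\mathcal{N}}$ is UPI for a constrained closed-loop Markovian switching system if $x_k\in C_{\theta_k}$ implies $x_{k+1}\in C_{\theta_{k+1}}$ (for every possible successor mode), with the state-input constraints satisfied. Terminal-set problem $\mathbb{P}_T(x,\theta)$, with a terminal penalty $V_f:\mathbb{R}^n\times\mathcal{N}\to\mathbb{R}$: $V_N^\star(x,\theta)=\inf_{\mathbf{u}_N}\mathbb{E}[V_f(x_N,\theta_N)+\sum_{j=0}^{N-1}\ell(x_j,u_j,\theta_j)\mid\mathfrak{F}_0]$ subject to, for $k=0,\dots,N-1$: $x_{k+1}=f(x_k,u_k,\theta_k)$, $(x_k,u_k)\in Y_{\theta_k}$, $(x_0,\theta_0)=(x,\theta)$, $x_N\in X^f_{\theta_N}$, $u_k\lhd\mathfrak{F}_k$. $\hat\kappa_N(x,\theta)$ is the first element of an optimal policy. *)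

theory Defs
  imports "HOL-Analysis.Analysis"
begin

text \<open>Modes are the natural numbers 1..nu; the transition matrix is P :: nat => nat => real,
only its entries on {1..nu} x {1..nu} matter.\<close>

definition modes :: "nat \<Rightarrow> nat set" where
  "modes nu = {1..nu}"

definition stochastic_matrix :: "nat \<Rightarrow> (nat \<Rightarrow> nat \<Rightarrow> real) \<Rightarrow> bool" where
  "stochastic_matrix nu P \<longleftrightarrow>
     (\<forall>i\<in>modes nu. \<forall>j\<in>modes nu. 0 \<le> P i j) \<and>
     (\<forall>i\<in>modes nu. (\<Sum>j\<in>modes nu. P i j) = 1)"

fun mpow :: "nat \<Rightarrow> (nat \<Rightarrow> nat \<Rightarrow> real) \<Rightarrow> nat \<Rightarrow> nat \<Rightarrow> nat \<Rightarrow> real" where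
  "mpow nu P 0 i j = (if i = j then 1 else 0)"
| "mpow nu P (Suc k) i j = (\<Sum>l\<in>modes nu. mpow nu P k i l * P l j)"

definition irreducible_chain :: "nat \<Rightarrow> (nat \<Rightarrow> nat \<Rightarrow> real) \<Rightarrow> bool" where
  "irreducible_chain nu P \<longleftrightarrow>
     (\<forall>i\<in>modes nu. \<forall>j\<in>modes nu. \<exists>k>0. mpow nu P k i j > 0)"

definition aperiodic_chain :: "nat \<Rightarrow> (nat \<Rightarrow> nat \<Rightarrow> real) \<Rightarrow> bool" where
  "aperiodic_chain nu P \<longleftrightarrow>
     (\<forall>i\<in>modes nu. Gcd {k. k > 0 \<and> mpow nu P k i i > 0} = 1)"

definition cover :: "nat \<Rightarrow> (nat \<Rightarrow> nat \<Rightarrow> real) \<Rightarrow> nat \<Rightarrow> nat set" where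
  "cover nu P i = {j \<in> modes nu. P i j > 0}"

definition lsc :: "('a::topological_space \<Rightarrow> real) \<Rightarrow> bool" where
  "lsc g \<longleftrightarrow> (\<forall>z t. t < g z \<longrightarrow> (\<forall>\<^sub>F z' in nhds z. t < g z'))"

definition level_bounded_loc_unif ::
  "('x::topological_space \<Rightarrow> 'u::metric_space \<Rightarrow> real) \<Rightarrow> bool" where
  "level_bounded_loc_unif g \<longleftrightarrow>
     (\<forall>x (\<alpha>::real). \<exists>V. open V \<and> x \<in> V \<and> bounded (\<Union>x'\<in>V. {u. g x' u \<le> \<alpha>}))"

definition UPI ::
  "nat \<Rightarrow> (nat \<Rightarrow> nat \<Rightarrow> real) \<Rightarrow> ('x \<Rightarrow> 'u \<Rightarrow> nat \<Rightarrow> 'x) \<Rightarrow> (nat \<Rightarrow> ('x \<times> 'u) set)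
   \<Rightarrow> ('x \<Rightarrow> nat \<Rightarrow> 'u) \<Rightarrow> (nat \<Rightarrow> 'x set) \<Rightarrow> bool" where
  "UPI nu P f Y kappa C \<longleftrightarrow>
     (\<forall>i\<in>modes nu. C i \<noteq> {}) \<and>
     (\<forall>i\<in>modes nu. \<forall>x\<in>C i. (x, kappa x i) \<in> Y i \<and>
        (\<forall>j\<in>cover nu P i. f x (kappa x i) i \<in> C j))"

text \<open>Mode histories theta_0..theta_N are lists of length N+1. A causal policy
  (u_k measurable w.r.t. F_k) is a map mu from mode histories: u_k = mu [theta_0,...,theta_k].\<close>
fun traj :: "('x \<Rightarrow> 'u \<Rightarrow> nat \<Rightarrow> 'x) \<Rightarrow> 'x \<Rightarrow> (nat list \<Rightarrow> 'u) \<Rightarrow> nat list \<Rightarrow> nat \<Rightarrow> 'x" where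
  "traj f x mu ps 0 = x"
| "traj f x mu ps (Suc k) = f (traj f x mu ps k) (mu (take (Suc k) ps)) (ps ! k)"

definition paths :: "nat \<Rightarrow> nat \<Rightarrow> nat \<Rightarrow> nat list set" where
  "paths nu N \<theta> = {ps. length ps = Suc N \<and> set ps \<subseteq> modes nu \<and> ps ! 0 = \<theta>}"

definition path_prob :: "(nat \<Rightarrow> nat \<Rightarrow> real) \<Rightarrow> nat \<Rightarrow> nat list \<Rightarrow> real" where
  "path_prob P N ps = (\<Prod>k<N. P (ps ! k) (ps ! Suc k))"

text \<open>Feasibility of a policy for P_T(x,theta): constraints hold almost surely,
  i.e. along every mode history of positive probability.\<close>
definition feasible_policy ::
  "nat \<Rightarrow> (nat \<Rightarrow> nat \<Rightarrow> real) \<Rightarrow> ('x \<Rightarrow> 'u \<Rightarrow> nat \<Rightarrow> 'x) \<Rightarrow> (nat \<Rightarrow> ('x \<times> 'u) set)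
   \<Rightarrow> (nat \<Rightarrow> 'x set) \<Rightarrow> nat \<Rightarrow> 'x \<Rightarrow> nat \<Rightarrow> (nat list \<Rightarrow> 'u) \<Rightarrow> bool" where
  "feasible_policy nu P f Y Xf N x \<theta> mu \<longleftrightarrow>
     (\<forall>ps\<in>paths nu N \<theta>. path_prob P N ps > 0 \<longrightarrow>
        (\<forall>k<N. (traj f x mu ps k, mu (take (Suc k) ps)) \<in> Y (ps ! k)) \<and>
        traj f x mu ps N \<in> Xf (ps ! N))"

definition feas_domain ::
  "nat \<Rightarrow> (nat \<Rightarrow> nat \<Rightarrow> real) \<Rightarrow> ('x \<Rightarrow> 'u \<Rightarrow> nat \<Rightarrow> 'x) \<Rightarrow> (nat \<Rightarrow> ('x \<times> 'u) set)
   \<Rightarrow> (nat \<Rightarrow> 'x set) \<Rightarrow> nat \<Rightarrow> ('x \<times> nat) set" where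
  "feas_domain nu P f Y Xf N =
     {(x, \<theta>). \<theta> \<in> modes nu \<and> (\<exists>mu. feasible_policy nu P f Y Xf N x \<theta> mu)}"

definition exp_cost ::
  "nat \<Rightarrow> (nat \<Rightarrow> nat \<Rightarrow> real) \<Rightarrow> ('x \<Rightarrow> 'u \<Rightarrow> nat \<Rightarrow> 'x) \<Rightarrow> ('x \<Rightarrow> 'u \<Rightarrow> nat \<Rightarrow> real)
   \<Rightarrow> ('x \<Rightarrow> nat \<Rightarrow> real) \<Rightarrow> nat \<Rightarrow> 'x \<Rightarrow> nat \<Rightarrow> (nat list \<Rightarrow> 'u) \<Rightarrow> real" where
  "exp_cost nu P f ell Vf N x \<theta> mu =
     (\<Sum>ps\<in>paths nu N \<theta>. path_prob P N ps *
        (Vf (traj f x mu ps N) (ps ! N) +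
         (\<Sum>k<N. ell (traj f x mu ps k) (mu (take (Suc k) ps)) (ps ! k))))"

definition optimal_policy ::
  "nat \<Rightarrow> (nat \<Rightarrow> nat \<Rightarrow> real) \<Rightarrow> ('x \<Rightarrow> 'u \<Rightarrow> nat \<Rightarrow> 'x) \<Rightarrow> (nat \<Rightarrow> ('x \<times> 'u) set)
   \<Rightarrow> (nat \<Rightarrow> 'x set) \<Rightarrow> ('x \<Rightarrow> 'u \<Rightarrow> nat \<Rightarrow> real) \<Rightarrow> ('x \<Rightarrow> nat \<Rightarrow> real)
   \<Rightarrow> nat \<Rightarrow> 'x \<Rightarrow> nat \<Rightarrow> (nat list \<Rightarrow> 'u) \<Rightarrow> bool" where
  "optimal_policy nu P f Y Xf ell Vf N x \<theta> mu \<longleftrightarrow>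
     feasible_policy nu P f Y Xf N x \<theta> mu \<and>
     (\<forall>mu'. feasible_policy nu P f Y Xf N x \<theta> mu' \<longrightarrow>
        exp_cost nu P f ell Vf N x \<theta> mu \<le> exp_cost nu P f ell Vf N x \<theta> mu')"

end

theory Submission
  imports Defs
begin

lemma shift_traj:
  fixes f :: "'x \<Rightarrow> 'u \<Rightarrow> nat \<Rightarrow> 'x"
  assumes len: "length ps = Suc N"
    and mu'_def: "\<And>qs. length qs < N \<Longrightarrow> mu' qs = mu (\<theta> # qs)"
  shows "k < N \<Longrightarrow> traj f (f x (mu [\<theta>]) \<theta>) mu' ps k = traj f x mu (\<theta> # take N ps) (Suc k)"
proof (induction k)
  case 0
  then show ?case by simp
next
  case (Suc k)
  have lt: "length (take (Suc k) ps) < N" using Suc.prems len by simp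
  have "take (Suc (Suc k)) (\<theta> # take N ps) = \<theta> # take (Suc k) ps"
    using Suc.prems by (simp add: min_def)
  moreover have "(\<theta> # take N ps) ! Suc k = ps ! k" using Suc.prems by simp
  ultimately show ?case using Suc mu'_def[OF lt] by simp
qed

theorem proposition2:
  fixes nu N :: nat
    and P :: "nat \<Rightarrow> nat \<Rightarrow> real"
    and f :: "real^'n \<Rightarrow> real^'m \<Rightarrow> nat \<Rightarrow> real^'n"
    and Y :: "nat \<Rightarrow> ((real^'n) \<times> (real^'m)) set"
    and ell :: "real^'n \<Rightarrow> real^'m \<Rightarrow> nat \<Rightarrow> real"
    and Vf :: "real^'n \<Rightarrow> nat \<Rightarrow> real"
    and Xf :: "nat \<Rightarrow> (real^'n) set"
    and \<kappa>f :: "real^'n \<Rightarrow> nat \<Rightarrow> real^'m"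
    and \<kappa>N :: "real^'n \<Rightarrow> nat \<Rightarrow> real^'m"
  assumes nu: "nu \<ge> 1"
    and horizon: "N \<ge> 1"
    and stoch: "stochastic_matrix nu P"
    and irred: "irreducible_chain nu P"
    and aper: "aperiodic_chain nu P"
    and Y_ne: "\<forall>i\<in>modes nu. Y i \<noteq> {}"
    and Y_compact: "\<forall>i\<in>modes nu. compact (Y i)"
    and f_cont: "\<forall>i\<in>modes nu. continuous_on UNIV (\<lambda>(x, u). f x u i)"
    and l_nonneg: "\<forall>i\<in>modes nu. \<forall>x u. 0 \<le> ell x u i"
    and l_lsc: "\<forall>i\<in>modes nu. lsc (\<lambda>(x, u). ell x u i)"
    and l_lb: "\<forall>i\<in>modes nu. level_bounded_loc_unif (\<lambda>x u. ell x u i)"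
    and Xf_UPI: "UPI nu P f Y \<kappa>f Xf"
    and kappaN: "\<forall>(x, \<theta>)\<in>feas_domain nu P f Y Xf N.
                   \<exists>mu. optimal_policy nu P f Y Xf ell Vf N x \<theta> mu \<and> \<kappa>N x \<theta> = mu [\<theta>]"
  shows "\<forall>(x, \<theta>)\<in>feas_domain nu P f Y Xf N. \<forall>\<theta>'\<in>cover nu P \<theta>.
           (f x (\<kappa>N x \<theta>) \<theta>, \<theta>') \<in> feas_domain nu P f Y Xf N"
proof (intro ballI, clarify)
  fix x \<theta> \<theta>'
  assume xt: "(x, \<theta>) \<in> feas_domain nu P f Y Xf N" and th': "\<theta>' \<in> cover nu P \<theta>"
  from kappaN xt obtain mu where opt: "optimal_policy nu P f Y Xf ell Vf N x \<theta> mu"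
    and kN: "\<kappa>N x \<theta> = mu [\<theta>]" by blast
  have feas: "feasible_policy nu P f Y Xf N x \<theta> mu" using opt unfolding optimal_policy_def by blast
  have thmod: "\<theta> \<in> modes nu" using xt unfolding feas_domain_def by blast
  have th'm: "\<theta>' \<in> modes nu" and Pth: "P \<theta> \<theta>' > 0" using th' unfolding cover_def by auto
  have Pnn: "\<And>i j. i \<in> modes nu \<Longrightarrow> j \<in> modes nu \<Longrightarrow> 0 \<le> P i j"
    using stoch unfolding stochastic_matrix_def by blast
  define mu' where "mu' = (\<lambda>qs. if length qs < N then mu (\<theta> # qs)
        else \<kappa>f (traj f x mu (\<theta> # qs) N) (qs ! (N - 1)))"
  have "feasible_policy nu P f Y Xf N (f x (\<kappa>N x \<theta>) \<theta>) \<theta>' mu'"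
    unfolding feasible_policy_def
  proof (intro ballI impI)
    fix ps assume ps: "ps \<in> paths nu N \<theta>'" and pp: "path_prob P N ps > 0"
    have len: "length ps = Suc N" and setps: "set ps \<subseteq> modes nu" and ps0: "ps ! 0 = \<theta>'"
      using ps unfolding paths_def by auto
    have psm: "\<And>k. k \<le> N \<Longrightarrow> ps ! k \<in> modes nu" using setps len
      by (metis le_imp_less_Suc nth_mem subsetD)
    have fac: "\<And>k. k < N \<Longrightarrow> P (ps ! k) (ps ! Suc k) > 0"
    proof -
      fix k assume k: "k < N"
      have "(\<Prod>k<N. P (ps ! k) (ps ! Suc k)) \<noteq> 0" using pp unfolding path_prob_def by linarith
      then have "P (ps ! k) (ps ! Suc k) \<noteq> 0" using k by (simp add: prod_zero_iff)
      moreover have "0 \<le> P (ps ! k) (ps ! Suc k)" using k psm Pnn by simp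
      ultimately show "P (ps ! k) (ps ! Suc k) > 0" by simp
    qed
    define oq where "oq = \<theta> # take N ps"
    have oqlen: "length oq = Suc N" using len oq_def by simp
    have oqnth: "\<And>k. k < N \<Longrightarrow> oq ! Suc k = ps ! k" using oq_def by simp
    have oq0: "oq ! 0 = \<theta>" using oq_def by simp
    have oq_in: "oq \<in> paths nu N \<theta>"
      unfolding paths_def oq_def using len setps thmod
      by (auto dest: in_set_takeD)
    have oqp: "path_prob P N oq > 0"
    proof -
      have "path_prob P N oq = (\<Prod>k<Suc (N - 1). P (oq ! k) (oq ! Suc k))"
        unfolding path_prob_def using horizon by simp
      also have "\<dots> = (\<Prod>k<N - 1. P (oq ! Suc k) (oq ! Suc (Suc k))) * P (oq ! 0) (oq ! Suc 0)"
        by (rule prod.lessThan_Suc_shift[THEN trans]) simp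
      also have "\<dots> = (\<Prod>k<N - 1. P (ps ! k) (ps ! Suc k)) * P \<theta> \<theta>'"
        using horizon oqnth oq0 ps0 by simp
      finally have eq: "path_prob P N oq = (\<Prod>k<N - 1. P (ps ! k) (ps ! Suc k)) * P \<theta> \<theta>'" .
      have "(\<Prod>k<N - 1. P (ps ! k) (ps ! Suc k)) > 0"
        by (rule prod_pos) (use fac in auto)
      then show ?thesis using eq Pth by simp
    qed
    from feas oq_in oqp have oldY: "\<And>k. k < N \<Longrightarrow> (traj f x mu oq k, mu (take (Suc k) oq)) \<in> Y (oq ! k)"
      and oldT: "traj f x mu oq N \<in> Xf (oq ! N)"
      unfolding feasible_policy_def by blast+
    have mu'1: "\<And>qs. length qs < N \<Longrightarrow> mu' qs = mu (\<theta> # qs)" unfolding mu'_def by simp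
    have sh: "\<And>k. k < N \<Longrightarrow> traj f (f x (\<kappa>N x \<theta>) \<theta>) mu' ps k = traj f x mu oq (Suc k)"
    proof -
      fix k assume k: "k < N"
      have "traj f (f x (mu [\<theta>]) \<theta>) mu' ps k = traj f x mu (\<theta> # take N ps) (Suc k)"
        by (rule shift_traj[of ps N mu' mu \<theta> k f x, OF len mu'1 k])
      then show "traj f (f x (\<kappa>N x \<theta>) \<theta>) mu' ps k = traj f x mu oq (Suc k)"
        unfolding kN oq_def .
    qed
    define z where "z = traj f x mu oq N"
    define i where "i = ps ! (N - 1)"
    have oqN: "oq ! N = i" using oqnth[of "N-1"] horizon i_def by simp
    have shN: "traj f (f x (\<kappa>N x \<theta>) \<theta>) mu' ps (N - 1) = z"
      using sh[of "N-1"] horizon z_def by simp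
    have mu'N: "mu' (take N ps) = \<kappa>f z i"
      unfolding mu'_def z_def i_def oq_def using len horizon by simp
    have im: "i \<in> modes nu" using psm i_def by simp
    have zX: "z \<in> Xf i" using oldT z_def oqN by simp
    have zY: "(z, \<kappa>f z i) \<in> Y i" and zC: "\<And>j. j \<in> cover nu P i \<Longrightarrow> f z (\<kappa>f z i) i \<in> Xf j"
      using Xf_UPI im zX unfolding UPI_def by blast+
    show "(\<forall>k<N. (traj f (f x (\<kappa>N x \<theta>) \<theta>) mu' ps k, mu' (take (Suc k) ps)) \<in> Y (ps ! k)) \<and>
          traj f (f x (\<kappa>N x \<theta>) \<theta>) mu' ps N \<in> Xf (ps ! N)"
    proof (intro conjI allI impI)
      fix k assume k: "k < N"
      show "(traj f (f x (\<kappa>N x \<theta>) \<theta>) mu' ps k, mu' (take (Suc k) ps)) \<in> Y (ps ! k)"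
      proof (cases "Suc k < N")
        case True
        have "mu' (take (Suc k) ps) = mu (take (Suc (Suc k)) oq)"
          using True len mu'1[of "take (Suc k) ps"] oq_def by (simp add: min_def)
        then show ?thesis using oldY[OF True] sh[OF k] oqnth[OF k] by simp
      next
        case False
        then have kN1: "k = N - 1" using k by simp
        then show ?thesis using shN mu'N zY i_def horizon by simp
      qed
    next
      have NN: "N = Suc (N - 1)" using horizon by simp
      have "traj f (f x (\<kappa>N x \<theta>) \<theta>) mu' ps N = f z (\<kappa>f z i) i"
      proof -
        have "traj f (f x (\<kappa>N x \<theta>) \<theta>) mu' ps (Suc (N - 1)) =
          f (traj f (f x (\<kappa>N x \<theta>) \<theta>) mu' ps (N - 1)) (mu' (take (Suc (N - 1)) ps)) (ps ! (N - 1))"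
          by (rule traj.simps(2))
        then show ?thesis using NN shN mu'N i_def by simp
      qed
      moreover have "ps ! N \<in> cover nu P i"
        unfolding cover_def using psm fac[of "N-1"] horizon i_def by simp
      ultimately show "traj f (f x (\<kappa>N x \<theta>) \<theta>) mu' ps N \<in> Xf (ps ! N)" using zC by simp
    qed
  qed
  then show "(f x (\<kappa>N x \<theta>) \<theta>, \<theta>') \<in> feas_domain nu P f Y Xf N"
    unfolding feas_domain_def using th'm by blast
qed

end
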